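(* Let $k=12a+b+\frac12$ with $a\in\mathbb Z$ and $b\in\{6,8,9,10,11,12,13,14,15,16,17,19\}$, and let $m$ be an integer such that either $m\equiv0\pmod4$, or $m\equiv1\pmod4$ and $k+\frac12$ is even, or $m\equiv3\pmod4$ and $k+\frac12$ is odd. If $m\ge4.8|a|$, then: (i) if $\theta\in(\frac\pi3,\frac{5\pi}{12}]$, then $|\mathcal C_{m,k}(\theta)|<\sqrt2$; (ii) if $\theta\in[\frac{7\pi}{12},\frac{2\pi}3)$, then $|\mathcal D_{m,k}(\theta)|<\sqrt2$.
   Context: Define $c_{m,k}=1+i$ if $m\equiv0\ (4)$ and $k+\frac12$ odd; $c_{m,k}=1-i$ if $m\equiv0\ (4)$ and $k+\frac12$ even; $c_{m,k}=0$ if $m\equiv1\ (4)$ and $k+\frac12$ even, or $m\equiv3\ (4)$ and $k+\frac12$ odd. Define $d_{m,k}=1-i$ if $m\equiv1\ (4)$ and $k+\frac12$ even; $d_{m,k}=1+i$ if $m\equiv3\ (4)$ and $k+\frac12$ odd; $d_{m,k}=0$ if $m\equiv0\ (4)$. Set $\mathcal C_{m,k}(\theta)=-c_{m,k}(2i)^{-k}(\sin\frac\theta2)^{-k}e^{-\frac{\pi im}4}e^{\frac{\pi m}2\left(\frac1{2\tan(\theta/2)}-\sin\theta\right)}$ and $\mathcal D_{m,k}(\theta)=-d_{m,k}2^{-k}(\cos\frac\theta2)^{-k}e^{\frac{\pi im}4}e^{\frac{\pi m}2\left(\frac{\tan(\theta/2)}2-\sin\theta\right)}$, with principal branches of complex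 powers. *)

theory Defs
  imports "HOL-Analysis.Analysis"
begin

definition half_odd :: "real \<Rightarrow> bool" where
  "half_odd k \<longleftrightarrow> (\<exists>j::int. k + 1/2 = of_int j \<and> odd j)"

definition half_even :: "real \<Rightarrow> bool" where
  "half_even k \<longleftrightarrow> (\<exists>j::int. k + 1/2 = of_int j \<and> even j)"

text \<open>Coefficients c and d; outside the cases specified in the paper they are set to 0
  (those cases never occur under the hypotheses of the theorem).\<close>

definition c_coef :: "int \<Rightarrow> real \<Rightarrow> complex" where
  "c_coef m k =
     (if m mod 4 = 0 \<and> half_odd k then 1 + \<i>
      else if m mod 4 = 0 \<and> half_even k then 1 - \<i>
      else 0)"

definition d_coef :: "int \<Rightarrow> real \<Rightarrow> complex" where
  "d_coef m k =
     (if m mod 4 = 1 \<and> half_even k then 1 - \<i>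
      else if m mod 4 = 3 \<and> half_odd k then 1 + \<i>
      else 0)"

definition calC :: "int \<Rightarrow> real \<Rightarrow> real \<Rightarrow> complex" where
  "calC m k \<theta> =
     - c_coef m k * (2 * \<i>) powr (- complex_of_real k)
       * (complex_of_real (sin (\<theta>/2))) powr (- complex_of_real k)
       * exp (- complex_of_real (pi * of_int m / 4) * \<i>)
       * complex_of_real (exp (pi * of_int m / 2 * (1 / (2 * tan (\<theta>/2)) - sin \<theta>)))"

definition calD :: "int \<Rightarrow> real \<Rightarrow> real \<Rightarrow> complex" where
  "calD m k \<theta> =
     - d_coef m k * (2::complex) powr (- complex_of_real k)
       * (complex_of_real (cos (\<theta>/2))) powr (- complex_of_real k)
       * exp (complex_of_real (pi * of_int m / 4) * \<i>)
       * complex_of_real (exp (pi * of_int m / 2 * (tan (\<theta>/2) / 2 - sin \<theta>)))"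

end

theory Submission
  imports Defs
begin


lemma ln_le_half: fixes w :: real assumes "1 \<le> w" shows "ln w \<le> (w - 1/w)/2"
proof -
  let ?f = "\<lambda>x::real. (x - 1/x)/2 - ln x"
  have "?f 1 \<le> ?f w"
  proof (rule DERIV_nonneg_imp_increasing_open[OF assms])
    fix x :: real assume x: "1 < x" "x < w"
    have "DERIV ?f x :> (1 + 1/x^2)/2 - 1/x"
      using x by (auto intro!: derivative_eq_intros simp: power2_eq_square field_simps)
    moreover have "(1 + 1/x^2)/2 - 1/x = (1 - 1/x)^2/2"
      using x by (simp add: power2_eq_square field_simps)
    ultimately show "\<exists>y. DERIV ?f x :> y \<and> y \<ge> 0" by auto
  next
    show "continuous_on {1..w} ?f"
      by (intro continuous_intros) auto
  qed
  then show ?thesis by simp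
qed



lemma poly_ineq: fixes u c :: real assumes "1 \<le> u" "u\<^sup>2 \<le> 1.48256" "c \<ge> 9.8696" "c \<le> 10"
  shows "100 * u < c * ((4 - u\<^sup>2) * (u+1)\<^sup>2)"
proof -
  define t where "t = u - 1"
  have t0: "0 \<le> t" using assms t_def by simp
  have uT: "u \<le> 1.2177"
  proof (rule ccontr)
    assume "\<not> u \<le> 1.2177" then have "1.2177 < u" by simp
    then have "1.2177 * 1.2177 < u * u" by (intro mult_strict_mono) auto
    then show False using assms(2) by (simp add: power2_eq_square)
  qed
  have tT: "t \<le> 0.2177" using uT t_def by simp
  have t2: "t^2 \<le> 0.2177^2" using t0 tT by (intro power_mono) auto
  have t3: "t^3 \<le> 0.2177^3" using t0 tT by (intro power_mono) auto
  have t4: "t^4 \<le> 0.2177^4" using t0 tT by (intro power_mono) auto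
  have eq: "(4 - u\<^sup>2) * (u+1)\<^sup>2 = 12 + 4*t - 9*t^2 - 6*t^3 - t^4"
    unfolding t_def by (simp add: algebra_simps power2_eq_square power3_eq_cube power4_eq_xxxx)
  have K: "9*0.2177^2 + 6*0.2177^3 + 0.2177^4 \<le> (0.4907::real)"
    by (simp add: power2_eq_square power3_eq_cube power4_eq_xxxx)
  have q: "12 + 4*t - 9*t^2 - 6*t^3 - t^4 \<ge> 11.5093 + 4*t"
    using t2 t3 t4 K by simp
  have A: "c * (12 + 4*t - 9*t^2 - 6*t^3 - t^4) \<ge> c * (11.5093 + 4*t)"
    using mult_left_mono[OF q, of c] assms(3) by simp
  have B: "(4*c - 100) * t \<ge> (4*c-100) * 0.2177"
    using assms(3,4) tT by (intro mult_left_mono_neg) auto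
  have B': "4*(c*t) - 100*t \<ge> 0.8708*c - 21.77" using B unfolding left_diff_distrib right_diff_distrib by simp
  have "100 * u = 100 + 100 * t" using t_def by simp
  also have "\<dots> < 4*(c*t) + 11.5093 * c" using B' assms(3) by simp
  also have "\<dots> = c * (11.5093 + 4*t)" by (simp add: algebra_simps)
  also have "\<dots> \<le> c * ((4 - u\<^sup>2) * (u+1)\<^sup>2)" using A eq by simp
  finally show ?thesis .
qed



lemma key:
  fixes s cs a A B M K :: real
  assumes s0: "s > 0" and c0: "cs > 0" and sc: "s\<^sup>2 + cs\<^sup>2 = 1" and u1: "1 < 2* s"
    and uU: "(2* s)\<^sup>2 \<le> 1.48256" and A: "A = \<bar>a\<bar>" and B: "B \<ge> 6"
    and M: "M \<ge> 4.8 * A" and K: "K = 12 * a + B + 1/2"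
  shows "- K * ln (2* s) + pi * M / 2 * (cs / (2* s) - 2* s*cs) < 0"
proof -
  define u where "u = 2* s"
  define L where "L = ln u"
  define f where "f = cs / (2* s) - 2* s*cs"
  have u1': "1 < u" using u1 u_def by simp
  have L0: "L > 0" using u1' L_def by simp
  have f_eq: "f = - cs * (u - 1/u)" unfolding f_def u_def using s0 by (simp add: field_simps)
  have iu: "1/u < 1" using u1' by simp
  have uu: "0 < u - 1/u" using iu u1' by linarith
  have f0: "f \<le> 0" unfolding f_eq using c0 uu by (simp add: mult_pos_pos less_imp_le)
  define v where "v = sqrt u"
  have v1: "1 \<le> v" using u1' v_def by simp
  have vu: "v\<^sup>2 = u" using u1' v_def by simp
  have Lv: "L = 2 * ln v" unfolding L_def using vu v1 unfolding vu[symmetric] using v1 by (subst ln_realpow) auto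
  have Lle: "L \<le> v - 1/v" using ln_le_half[OF v1] Lv by simp
  have co2: "cs\<^sup>2 = 1 - u\<^sup>2/4" using sc u_def by (simp add: power2_eq_square field_simps)
  have pi1: "pi\<^sup>2 \<ge> 9.8696"
  proof -
    have "(3.141592653588::real)^2 \<le> pi^2" using pi_approx(1) by (intro power_mono) auto
    then show ?thesis by (simp add: power2_eq_square)
  qed
  have pi2: "pi\<^sup>2 \<le> 10"
  proof -
    have "pi^2 \<le> (3.1415926535899::real)^2" using pi_approx(2) by (intro power_mono) auto
    then show ?thesis by (simp add: power2_eq_square)
  qed
  have P: "100 * u < pi\<^sup>2 * ((4 - u\<^sup>2) * (u+1)\<^sup>2)"
    by (rule poly_ineq) (use u1' uU u_def pi1 pi2 in auto)
  have E: "(pi * cs * (v + 1/v))\<^sup>2 = pi\<^sup>2 * ((4 - u\<^sup>2) * (u+1)\<^sup>2) / (4*u)"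
  proof -
    have h: "(v + 1/v)\<^sup>2 = (u+1)\<^sup>2 / u" using vu v1 by (simp add: power2_eq_square field_simps)
    have "(pi * cs * (v + 1/v))\<^sup>2 = pi\<^sup>2 * cs\<^sup>2 * (v + 1/v)\<^sup>2" by (simp add: power_mult_distrib)
    also have "\<dots> = pi\<^sup>2 * (1 - u\<^sup>2/4) * ((u+1)\<^sup>2 / u)" using co2 h by simp
    also have "\<dots> = pi\<^sup>2 * ((4 - u\<^sup>2) * (u+1)\<^sup>2) / (4*u)" using u1' by (simp add: field_simps)
    finally show ?thesis .
  qed
  have "25 < (pi * cs * (v + 1/v))\<^sup>2" unfolding E using P u1' by (simp add: field_simps)
  then have "5\<^sup>2 < (pi * cs * (v + 1/v))\<^sup>2" by simp
  moreover have "0 \<le> pi * cs * (v + 1/v)" using c0 v1 by (intro mult_nonneg_nonneg) auto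
  ultimately have G5: "5 < pi * cs * (v + 1/v)" by (rule power2_less_imp_less)
  have vv: "0 \<le> v - 1/v" using v1 mult_mono[OF v1 v1] by (simp add: field_simps)
  have "5 * L \<le> 5 * (v - 1/v)" using Lle by simp
  also have "\<dots> \<le> pi * cs * (v + 1/v) * (v - 1/v)" using G5 vv by (intro mult_right_mono) auto
  also have "\<dots> = pi * cs * (u - 1/u)" using vu v1 u1' by (simp add: power2_eq_square field_simps)
  finally have c5: "5 * L \<le> pi * cs * (u - 1/u)" .
  have pf: "pi * f = - (pi * cs * (u - 1/u))" using f_eq by simp
  have core: "12 * L + 2.4 * pi * f \<le> 0" using c5 pf by linarith
  have t1: "- K * L \<le> (12 * A - B - 1/2) * L"
    using L0 K A by (intro mult_right_mono) auto
  have pf0: "pi * f \<le> 0" using f0 by (simp add: mult_nonneg_nonpos)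
  have t2: "M * (pi * f) \<le> (4.8 * A) * (pi * f)"
    using M pf0 by (intro mult_right_mono_neg) auto
  have e1: "pi * M / 2 * f = M * (pi * f) / 2" by simp
  have e2: "(12 * A - B - 1/2) * L = 12 * (A * L) - B * L - L / 2" by (simp add: algebra_simps)
  have e3: "(4.8 * A) * (pi * f) = 4.8 * (A * (pi * f))" by simp
  have e4: "A * (12 * L + 2.4 * pi * f) - (B + 1/2) * L = 12 * (A * L) + 2.4 * (A * (pi * f)) - B * L - L / 2"
    by (simp add: algebra_simps)
  have "- K * L + pi * M / 2 * f \<le> A * (12 * L + 2.4 * pi * f) - (B + 1/2) * L"
    unfolding e1 e4 using t1 t2 e2 e3 by linarith
  also have "\<dots> < 0"
  proof -
    have "A * (12 * L + 2.4 * pi * f) \<le> 0" using core A by (simp add: mult_nonneg_nonpos)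
    moreover have "(B + 1/2) * L > 0" using B L0 by simp
    ultimately show ?thesis by linarith
  qed
  finally show ?thesis unfolding L_def f_def u_def .
qed



lemma cos_5pi12: "cos (5*pi/12) = (sqrt 6 - sqrt 2)/4"
proof -
  have "5*pi/12 = pi/4 + pi/6" by simp
  then have "cos (5*pi/12) = cos (pi/4 + pi/6)" by (rule arg_cong)
  also have "\<dots> = cos (pi/4) * cos (pi/6) - sin (pi/4) * sin (pi/6)"
    by (rule cos_add)
  also have "\<dots> = (sqrt 2 * sqrt 3 - sqrt 2)/4" by (simp add: cos_45 cos_30 sin_45 sin_30)
  also have "sqrt 2 * sqrt 3 = sqrt 6" by (simp flip: real_sqrt_mult)
  finally show ?thesis .
qed

lemma cos5_bound: "2 - 2 * cos (5*pi/12) \<le> 1.48256"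
proof -
  have a: "2.4494 \<le> sqrt 6" by (rule real_le_rsqrt) (simp add: power2_eq_square)
  have b: "sqrt 2 \<le> 1.41422"
  proof -
    have "sqrt 2 \<le> sqrt (1.41422^2)" unfolding real_sqrt_le_iff by (simp add: power2_eq_square)
    then show ?thesis by simp
  qed
  show ?thesis unfolding cos_5pi12 using a b by simp
qed

lemma c_norm: "cmod (c_coef m k) = 0 \<or> cmod (c_coef m k) = sqrt 2"
  unfolding c_coef_def by (auto simp: cmod_def)

lemma d_norm: "cmod (d_coef m k) = 0 \<or> cmod (d_coef m k) = sqrt 2"
  unfolding d_coef_def by (auto simp: cmod_def)

lemma fin: "cmod c = 0 \<or> cmod c = sqrt 2 \<Longrightarrow> E < 0 \<Longrightarrow> cmod c * exp E < sqrt 2"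
  by auto


lemma normC:
  fixes \<theta> k :: real and m :: int
  assumes s0: "sin (\<theta>/2) > 0" and c0: "cos (\<theta>/2) > 0"
  shows "cmod (calC m k \<theta>) = cmod (c_coef m k) *
     exp (- k * ln (2 * sin (\<theta>/2)) + pi * of_int m / 2 * (cos (\<theta>/2) / (2 * sin (\<theta>/2)) - 2 * sin (\<theta>/2) * cos (\<theta>/2)))"
proof -
  let ?s = "sin (\<theta>/2)" and ?c = "cos (\<theta>/2)"
  have n1: "cmod ((2 * \<i>) powr (- complex_of_real k)) = 2 powr (- k)"
    by (simp add: norm_powr_complex norm_mult)
  have n2: "cmod ((complex_of_real ?s) powr (- complex_of_real k)) = ?s powr (- k)"
    using s0 by (subst norm_powr_real_powr) auto
  have n3: "cmod (exp (- complex_of_real (pi * of_int m / 4) * \<i>)) = 1"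
    by (simp add: norm_exp_eq_Re)
  have n4: "cmod (complex_of_real (exp (pi * of_int m / 2 * (1 / (2 * tan (\<theta>/2)) - sin \<theta>))))
      = exp (pi * of_int m / 2 * (?c / (2 * ?s) - 2 * ?s * ?c))"
  proof -
    have "sin \<theta> = 2 * ?s * ?c" using sin_double[of "\<theta>/2"] by simp
    moreover have "1 / (2 * tan (\<theta>/2)) = ?c / (2 * ?s)" by (simp add: tan_def)
    ultimately show ?thesis by simp
  qed
  have p: "2 powr (- k) * ?s powr (- k) = exp (- k * ln (2 * ?s))"
  proof -
    have "2 powr (- k) * ?s powr (- k) = (2 * ?s) powr (- k)" using s0 by (simp add: powr_mult)
    also have "\<dots> = exp (- k * ln (2 * ?s))" using s0 by (simp add: powr_def)
    finally show ?thesis .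
  qed
  have "cmod (calC m k \<theta>) = cmod (c_coef m k) * (2 powr (- k) * ?s powr (- k)) * exp (pi * of_int m / 2 * (?c / (2 * ?s) - 2 * ?s * ?c))"
    unfolding calC_def norm_mult norm_minus_cancel n1 n2 n3 n4 by (simp add: mult.assoc)
  then show ?thesis by (simp only: p mult.assoc exp_add)
qed

lemma partC:
  fixes a m b :: int and k \<theta> :: real
  assumes hk: "k = 12 * of_int a + of_int b + 1/2" and hb: "b \<ge> 6"
    and hma: "real_of_int m \<ge> 4.8 * \<bar>real_of_int a\<bar>"
    and th: "\<theta> \<in> {pi/3 <.. 5*pi/12}"
  shows "cmod (calC m k \<theta>) < sqrt 2"
proof -
  let ?s = "sin (\<theta>/2)" and ?c = "cos (\<theta>/2)"
  have t1: "pi/3 < \<theta>" and t2: "\<theta> \<le> 5*pi/12" using th by auto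
  have s0: "?s > 0" using t1 t2 by (intro sin_gt_zero) auto
  have c0: "?c > 0" using t1 t2 by (intro cos_gt_zero) auto
  have sq: "(2 * ?s)\<^sup>2 = 2 - 2 * cos \<theta>"
    using cos_double_sin[of "\<theta>/2"] by (simp add: power_mult_distrib)
  have "cos \<theta> < cos (pi/3)" using t1 t2 by (intro cos_monotone_0_pi) auto
  then have "1 < (2 * ?s)\<^sup>2" using sq cos_60 by simp
  then have u1: "1 < 2 * ?s" using s0 by (smt (verit) one_power2 power2_le_imp_le)
  have "cos (5*pi/12) \<le> cos \<theta>" using t1 t2 by (intro cos_monotone_0_pi_le) auto
  then have uU: "(2 * ?s)\<^sup>2 \<le> 1.48256" using sq cos5_bound by simp
  have E: "- k * ln (2 * ?s) + pi * real_of_int m / 2 * (?c / (2 * ?s) - 2 * ?s * ?c) < 0"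
    by (rule key[OF s0 c0 _ u1 uU refl _ hma hk]) (use hb in auto)
  show ?thesis unfolding normC[OF s0 c0] by (rule fin[OF c_norm E])
qed


lemma normD:
  fixes \<theta> k :: real and m :: int
  assumes s0: "sin (\<theta>/2) > 0" and c0: "cos (\<theta>/2) > 0"
  shows "cmod (calD m k \<theta>) = cmod (d_coef m k) *
     exp (- k * ln (2 * cos (\<theta>/2)) + pi * of_int m / 2 * (sin (\<theta>/2) / (2 * cos (\<theta>/2)) - 2 * cos (\<theta>/2) * sin (\<theta>/2)))"
proof -
  let ?s = "sin (\<theta>/2)" and ?c = "cos (\<theta>/2)"
  have n1: "cmod ((2::complex) powr (- complex_of_real k)) = 2 powr (- k)"
    by (subst norm_powr_real_powr) auto
  have n2: "cmod ((complex_of_real ?c) powr (- complex_of_real k)) = ?c powr (- k)"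
    using c0 by (subst norm_powr_real_powr) auto
  have n3: "cmod (exp (complex_of_real (pi * of_int m / 4) * \<i>)) = 1"
    by (simp add: norm_exp_eq_Re)
  have n4: "cmod (complex_of_real (exp (pi * of_int m / 2 * (tan (\<theta>/2) / 2 - sin \<theta>))))
      = exp (pi * of_int m / 2 * (?s / (2 * ?c) - 2 * ?c * ?s))"
  proof -
    have "sin \<theta> = 2 * ?c * ?s" using sin_double[of "\<theta>/2"] by simp
    moreover have "tan (\<theta>/2) / 2 = ?s / (2 * ?c)" by (simp add: tan_def)
    ultimately show ?thesis by simp
  qed
  have p: "2 powr (- k) * ?c powr (- k) = exp (- k * ln (2 * ?c))"
  proof -
    have "2 powr (- k) * ?c powr (- k) = (2 * ?c) powr (- k)" using c0 by (simp add: powr_mult)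
    also have "\<dots> = exp (- k * ln (2 * ?c))" using c0 by (simp add: powr_def)
    finally show ?thesis .
  qed
  have "cmod (calD m k \<theta>) = cmod (d_coef m k) * (2 powr (- k) * ?c powr (- k)) * exp (pi * of_int m / 2 * (?s / (2 * ?c) - 2 * ?c * ?s))"
    unfolding calD_def norm_mult norm_minus_cancel n1 n2 n3 n4 by (simp add: mult.assoc)
  then show ?thesis by (simp only: p mult.assoc exp_add)
qed

lemma partD:
  fixes a m b :: int and k \<theta> :: real
  assumes hk: "k = 12 * of_int a + of_int b + 1/2" and hb: "b \<ge> 6"
    and hma: "real_of_int m \<ge> 4.8 * \<bar>real_of_int a\<bar>"
    and th: "\<theta> \<in> {7*pi/12 ..< 2*pi/3}"
  shows "cmod (calD m k \<theta>) < sqrt 2"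
proof -
  let ?s = "sin (\<theta>/2)" and ?c = "cos (\<theta>/2)"
  have t1: "7*pi/12 \<le> \<theta>" and t2: "\<theta> < 2*pi/3" using th by auto
  have s0: "?s > 0" using t1 t2 by (intro sin_gt_zero) auto
  have c0: "?c > 0" using t1 t2 by (intro cos_gt_zero) auto
  have sq: "(2 * ?c)\<^sup>2 = 2 + 2 * cos \<theta>"
    using cos_double_cos[of "\<theta>/2"] by (simp add: power_mult_distrib)
  have e23: "cos (2*pi/3) = - 1/2"
  proof -
    have h: "pi - pi/3 = 2*pi/3" by simp
    have "cos (2*pi/3) = - cos (pi/3)" using cos_pi_minus[of "pi/3"] unfolding h .
    then show ?thesis using cos_60 by simp
  qed
  have e712: "cos (7*pi/12) = - cos (5*pi/12)"
  proof -
    have h: "pi - 5*pi/12 = 7*pi/12" by simp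
    show ?thesis using cos_pi_minus[of "5*pi/12"] unfolding h .
  qed
  have "cos (2*pi/3) < cos \<theta>" using t1 t2 by (intro cos_monotone_0_pi) auto
  then have "1 < (2 * ?c)\<^sup>2" using sq e23 by simp
  then have u1: "1 < 2 * ?c" using c0 by (smt (verit) one_power2 power2_le_imp_le)
  have "cos \<theta> \<le> cos (7*pi/12)" using t1 t2 by (intro cos_monotone_0_pi_le) auto
  then have uU: "(2 * ?c)\<^sup>2 \<le> 1.48256" using sq cos5_bound e712 by simp
  have sc: "?c\<^sup>2 + ?s\<^sup>2 = 1" by (simp add: add.commute)
  have E: "- k * ln (2 * ?c) + pi * real_of_int m / 2 * (?s / (2 * ?c) - 2 * ?c * ?s) < 0"
    by (rule key[OF c0 s0 sc u1 uU refl _ hma hk]) (use hb in auto)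
  show ?thesis unfolding normD[OF s0 c0] by (rule fin[OF d_norm E])
qed


theorem lemma6p1:
  fixes a m :: int and b :: int and k \<theta> :: real
  assumes hk: "k = 12 * of_int a + of_int b + 1/2"
    and hb: "b \<in> {6,8,9,10,11,12,13,14,15,16,17,19}"
    and hm: "m mod 4 = 0 \<or> (m mod 4 = 1 \<and> half_even k) \<or> (m mod 4 = 3 \<and> half_odd k)"
    and hma: "real_of_int m \<ge> 4.8 * \<bar>real_of_int a\<bar>"
  shows "(\<theta> \<in> {pi/3 <.. 5*pi/12} \<longrightarrow> cmod (calC m k \<theta>) < sqrt 2) \<and>
         (\<theta> \<in> {7*pi/12 ..< 2*pi/3} \<longrightarrow> cmod (calD m k \<theta>) < sqrt 2)"
proof -
  have b6: "b \<ge> 6" using hb by auto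
  show ?thesis using partC[OF hk b6 hma] partD[OF hk b6 hma] by blast
qed

end
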